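(* For every finite graph $G$, $\mathrm{lw}_{\chi(G)}(G)\leq \chi(G)$, where $\chi(G)$ is the chromatic number of $G$.
   Context: All graphs are finite, simple and undirected. For vertices $u,v$ of a connected graph, the interval $I(u,v)$ is the set of vertices lying on some shortest $(u,v)$-path. A set $S$ of vertices is (geodesically) convex if $I(u,v)\subseteq S$ for all $u,v\in S$. A graph $M$ is median if it is connected and for any three vertices $u,v,w$ we have $|I(u,v)\cap I(v,w)\cap I(w,u)|=1$. A median decomposition of a graph $G$ is a pair $(M,\mathcal{X})$ where $M$ is a median graph and $\mathcal{X}=(X_a)_{a\in V(M)}$ is a family of subsets of $V(G)$ (bags) such that (M1) for every edge $uv\in E(G)$ there is $a\in V(M)$ with $u,v\in X_a$, and (M2) for every $v\in V(G)$ the set $\{a\in V(M): v\in X_a\}$ is non-empty and convex in $M$. Its width is $\max_{a\in V(M)}|X_a|$. A $k$-lattice is a Cartesian product of $k$ (finite) paths. The lattice dimension of a graph $M$ is the least $k$ such that $M$ admits an isometric (distance-preserving) embedding into a $k$-lattice. For $i\geq1$, an $i$-lattice decomposition of $G$ is a median decomposition $(M,\mathcal{X})$ of $G$ with $M$ of lattice dimension at most $i$, and the $i$-latticewidth $\mathrm{lw}_i(G)$ is the minimum width of an $i$-lattice decomposition of $G$. *)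

theory Defs
  imports Main
begin

definition graph :: "'a set \<Rightarrow> ('a \<times> 'a) set \<Rightarrow> bool" where
  "graph V E \<longleftrightarrow> finite V \<and> E \<subseteq> V \<times> V \<and> sym E \<and> (\<forall>x. (x, x) \<notin> E)"

definition walk :: "'a set \<Rightarrow> ('a \<times> 'a) set \<Rightarrow> 'a list \<Rightarrow> bool" where
  "walk V E xs \<longleftrightarrow> xs \<noteq> [] \<and> set xs \<subseteq> V \<and>
     (\<forall>i. Suc i < length xs \<longrightarrow> (xs ! i, xs ! Suc i) \<in> E)"

definition walk_of_len :: "'a set \<Rightarrow> ('a \<times> 'a) set \<Rightarrow> 'a \<Rightarrow> 'a \<Rightarrow> nat \<Rightarrow> 'a list \<Rightarrow> bool" where
  "walk_of_len V E u v n xs \<longleftrightarrow> walk V E xs \<and> hd xs = u \<and> last xs = v \<and> length xs = Suc n"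

definition connected_graph :: "'a set \<Rightarrow> ('a \<times> 'a) set \<Rightarrow> bool" where
  "connected_graph V E \<longleftrightarrow> V \<noteq> {} \<and> (\<forall>u\<in>V. \<forall>v\<in>V. \<exists>n xs. walk_of_len V E u v n xs)"

definition gdist :: "'a set \<Rightarrow> ('a \<times> 'a) set \<Rightarrow> 'a \<Rightarrow> 'a \<Rightarrow> nat" where
  "gdist V E u v = (LEAST n. \<exists>xs. walk_of_len V E u v n xs)"

definition interval :: "'a set \<Rightarrow> ('a \<times> 'a) set \<Rightarrow> 'a \<Rightarrow> 'a \<Rightarrow> 'a set" where
  "interval V E u v = {w. \<exists>xs. walk_of_len V E u v (gdist V E u v) xs \<and> w \<in> set xs}"

definition convex_set :: "'a set \<Rightarrow> ('a \<times> 'a) set \<Rightarrow> 'a set \<Rightarrow> bool" where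
  "convex_set V E S \<longleftrightarrow> S \<subseteq> V \<and> (\<forall>u\<in>S. \<forall>v\<in>S. interval V E u v \<subseteq> S)"

definition median_graph :: "'a set \<Rightarrow> ('a \<times> 'a) set \<Rightarrow> bool" where
  "median_graph V E \<longleftrightarrow> connected_graph V E \<and>
     (\<forall>u\<in>V. \<forall>v\<in>V. \<forall>w\<in>V.
        card (interval V E u v \<inter> interval V E v w \<inter> interval V E w u) = 1)"

text \<open>The k-lattice: Cartesian product of the paths with ns!0, ..., ns!(k-1) vertices
  (k = length ns); vertices are coordinate lists, adjacent iff they differ by 1 in exactly one coordinate.\<close>
definition lattice_V :: "nat list \<Rightarrow> nat list set" where
  "lattice_V ns = {xs. length xs = length ns \<and> (\<forall>j<length ns. xs ! j < ns ! j)}"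

definition lattice_E :: "nat list \<Rightarrow> (nat list \<times> nat list) set" where
  "lattice_E ns = {(xs, ys). xs \<in> lattice_V ns \<and> ys \<in> lattice_V ns \<and>
     (\<exists>j<length ns. (xs ! j + 1 = ys ! j \<or> ys ! j + 1 = xs ! j) \<and>
        (\<forall>l<length ns. l \<noteq> j \<longrightarrow> xs ! l = ys ! l))}"

definition isometric_embedding_lattice :: "'b set \<Rightarrow> ('b \<times> 'b) set \<Rightarrow> nat list \<Rightarrow> ('b \<Rightarrow> nat list) \<Rightarrow> bool" where
  "isometric_embedding_lattice V E ns \<phi> \<longleftrightarrow> \<phi> ` V \<subseteq> lattice_V ns \<and>
     (\<forall>u\<in>V. \<forall>v\<in>V. gdist (lattice_V ns) (lattice_E ns) (\<phi> u) (\<phi> v) = gdist V E u v)"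

definition embeds_in_lattice :: "'b set \<Rightarrow> ('b \<times> 'b) set \<Rightarrow> nat \<Rightarrow> bool" where
  "embeds_in_lattice V E k \<longleftrightarrow>
     (\<exists>ns \<phi>. length ns = k \<and> (\<forall>j<k. ns ! j > 0) \<and> isometric_embedding_lattice V E ns \<phi>)"

definition lattice_dim_le :: "'b set \<Rightarrow> ('b \<times> 'b) set \<Rightarrow> nat \<Rightarrow> bool" where
  "lattice_dim_le V E i \<longleftrightarrow> (\<exists>k\<le>i. embeds_in_lattice V E k)"

definition median_decomposition ::
  "'a set \<Rightarrow> ('a \<times> 'a) set \<Rightarrow> nat set \<Rightarrow> (nat \<times> nat) set \<Rightarrow> (nat \<Rightarrow> 'a set) \<Rightarrow> bool" where
  "median_decomposition V E VM EM X \<longleftrightarrow>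
     graph VM EM \<and> median_graph VM EM \<and> (\<forall>a\<in>VM. X a \<subseteq> V) \<and>
     (\<forall>(u, v)\<in>E. \<exists>a\<in>VM. u \<in> X a \<and> v \<in> X a) \<and>
     (\<forall>v\<in>V. {a\<in>VM. v \<in> X a} \<noteq> {} \<and> convex_set VM EM {a\<in>VM. v \<in> X a})"

definition decomp_width :: "nat set \<Rightarrow> (nat \<Rightarrow> 'a set) \<Rightarrow> nat" where
  "decomp_width VM X = Max ((\<lambda>a. card (X a)) ` VM)"

definition latticewidth :: "nat \<Rightarrow> 'a set \<Rightarrow> ('a \<times> 'a) set \<Rightarrow> nat" where
  "latticewidth i V E = Inf {w. \<exists>VM EM X. median_decomposition V E VM EM X \<and>
      lattice_dim_le VM EM i \<and> w = decomp_width VM X}"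

definition chromatic_number :: "'a set \<Rightarrow> ('a \<times> 'a) set \<Rightarrow> nat" where
  "chromatic_number V E = (LEAST k. \<exists>c. c ` V \<subseteq> {..<k} \<and> (\<forall>(u, v)\<in>E. c u \<noteq> c v))"

end

theory Submission imports Defs "HOL-Library.Countable" begin

lemma walk_single[simp]: "walk V E [x] \<longleftrightarrow> x \<in> V"
  by (simp add: walk_def)

lemma walk_Cons2[simp]: "walk V E (x#y#ys) \<longleftrightarrow> x\<in>V \<and> (x,y)\<in>E \<and> walk V E (y#ys)"
proof
  assume "walk V E (x#y#ys)"
  then show "x\<in>V \<and> (x,y)\<in>E \<and> walk V E (y#ys)"
    unfolding walk_def by (auto dest: spec[of _ "Suc _"] spec[of _ 0])
next
  assume h: "x\<in>V \<and> (x,y)\<in>E \<and> walk V E (y#ys)"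
  show "walk V E (x#y#ys)" unfolding walk_def
  proof (intro conjI allI impI)
    fix i assume "Suc i < length (x#y#ys)"
    then show "((x#y#ys) ! i, (x#y#ys) ! Suc i) \<in> E"
      using h unfolding walk_def by (cases i) auto
  qed (use h in \<open>auto simp: walk_def\<close>)
qed

lemma walk_nonempty: "walk V E xs \<Longrightarrow> xs \<noteq> []" by (simp add: walk_def)

lemma walk_set: "walk V E xs \<Longrightarrow> set xs \<subseteq> V" by (simp add: walk_def)

lemma walk_append_split:
  "walk V E (xs @ ys) \<Longrightarrow> xs \<noteq> [] \<Longrightarrow> ys \<noteq> [] \<Longrightarrow> walk V E xs \<and> walk V E ys"
proof (induction xs)
  case Nil then show ?case by simp
next
  case (Cons x xs)
  show ?case
  proof (cases xs)
    case Nil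
    then show ?thesis using Cons.prems by (cases ys) auto
  next
    case (Cons x' xs')
    then show ?thesis using Cons.prems Cons.IH by auto
  qed
qed

lemma walk_concat:
  "walk V E xs \<Longrightarrow> walk V E ys \<Longrightarrow> last xs = hd ys \<Longrightarrow> walk V E (xs @ tl ys)"
proof (induction xs)
  case Nil then show ?case by (simp add: walk_def)
next
  case (Cons x xs)
  show ?case
  proof (cases xs)
    case Nil
    then show ?thesis using Cons.prems by (cases ys) (auto simp: walk_def)
  next
    case (Cons x' xs')
    then show ?thesis using Cons.prems Cons.IH by auto
  qed
qed

lemma walk_map:
  assumes "walk V E xs" "E \<subseteq> V \<times> V"
  shows "walk (f ` V) (map_prod f f ` E) (map f xs)"
  using assms unfolding walk_def by (auto intro!: imageI)

lemma walk_unmap: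
  assumes "walk (f ` V) (map_prod f f ` E) ys" "inj_on f V" "E \<subseteq> V \<times> V"
  shows "\<exists>xs. ys = map f xs \<and> walk V E xs"
proof -
  let ?g = "inv_into V f"
  have ys: "set ys \<subseteq> f ` V" using assms(1) by (simp add: walk_def)
  have "map f (map ?g ys) = ys"
    unfolding map_map by (rule map_idI) (use ys in \<open>auto simp: f_inv_into_f\<close>)
  then have 1: "ys = map f (map ?g ys)" by simp
  have 2: "walk V E (map ?g ys)"
    unfolding walk_def
  proof (intro conjI allI impI)
    show "map ?g ys \<noteq> []" using assms(1) by (simp add: walk_def)
    show "set (map ?g ys) \<subseteq> V" using ys by (auto intro: inv_into_into)
    fix i assume i: "Suc i < length (map ?g ys)"
    then have "(ys ! i, ys ! Suc i) \<in> map_prod f f ` E" using assms(1) by (simp add: walk_def)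
    then obtain a b where ab: "(a,b) \<in> E" "ys ! i = f a" "ys ! Suc i = f b" by auto
    have "a \<in> V" "b \<in> V" using ab assms(3) by auto
    then show "(map ?g ys ! i, map ?g ys ! Suc i) \<in> E"
      using ab i assms(2) by (simp add: inv_into_f_f)
  qed
  show ?thesis using 1 2 by blast
qed


lemma interval_subset: "interval V E u v \<subseteq> V"
  unfolding interval_def walk_of_len_def using walk_set by fastforce

context
  fixes V :: "'a set" and E and f :: "'a \<Rightarrow> 'b"
  assumes inj: "inj_on f V" and EV: "E \<subseteq> V \<times> V"
begin

lemma wol_transfer:
  assumes "u \<in> V" "v \<in> V"
  shows "walk_of_len (f`V) (map_prod f f ` E) (f u) (f v) n ys \<longleftrightarrow>
         (\<exists>xs. walk_of_len V E u v n xs \<and> ys = map f xs)"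
proof
  assume h: "walk_of_len (f`V) (map_prod f f ` E) (f u) (f v) n ys"
  then obtain xs where xs: "ys = map f xs" "walk V E xs"
    using walk_unmap[OF _ inj EV] unfolding walk_of_len_def by blast
  have ne: "xs \<noteq> []" using xs walk_nonempty by blast
  have "hd xs \<in> V" "last xs \<in> V" using walk_set[OF xs(2)] ne by auto
  moreover have "f (hd xs) = f u" "f (last xs) = f v"
    using h xs ne by (auto simp: walk_of_len_def hd_map last_map)
  ultimately have "hd xs = u" "last xs = v" using inj assms by (auto dest: inj_onD)
  then show "\<exists>xs. walk_of_len V E u v n xs \<and> ys = map f xs"
    using xs h by (auto simp: walk_of_len_def)
next
  assume "\<exists>xs. walk_of_len V E u v n xs \<and> ys = map f xs"
  then obtain xs where "walk_of_len V E u v n xs" "ys = map f xs" by blast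
  then show "walk_of_len (f`V) (map_prod f f ` E) (f u) (f v) n ys"
    using walk_map[OF _ EV, of xs f] walk_nonempty[of V E xs]
    by (auto simp: walk_of_len_def hd_map last_map)
qed

lemma gdist_transfer:
  assumes "u \<in> V" "v \<in> V"
  shows "gdist (f`V) (map_prod f f ` E) (f u) (f v) = gdist V E u v"
  unfolding gdist_def using wol_transfer[OF assms] by metis

lemma interval_transfer:
  assumes "u \<in> V" "v \<in> V"
  shows "interval (f`V) (map_prod f f ` E) (f u) (f v) = f ` interval V E u v"
  unfolding interval_def gdist_transfer[OF assms] wol_transfer[OF assms]
  apply (auto simp: image_iff)
  subgoal by blast
  subgoal for x xs by (rule exI[of _ "map f xs"]) auto
  done

lemma convex_transfer:
  assumes "convex_set V E S"
  shows "convex_set (f`V) (map_prod f f ` E) (f`S)"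
  unfolding convex_set_def
proof (intro conjI ballI)
  show "f ` S \<subseteq> f ` V" using assms by (auto simp: convex_set_def)
  fix a b assume "a \<in> f ` S" "b \<in> f ` S"
  then obtain u v where uv: "u \<in> S" "v \<in> S" "a = f u" "b = f v" by auto
  have "u \<in> V" "v \<in> V" using uv assms by (auto simp: convex_set_def)
  then show "interval (f ` V) (map_prod f f ` E) a b \<subseteq> f ` S"
    using uv assms by (auto simp: interval_transfer convex_set_def) (meson imageI subsetD)
qed

lemma connected_transfer:
  assumes "connected_graph V E"
  shows "connected_graph (f`V) (map_prod f f ` E)"
  unfolding connected_graph_def
proof (intro conjI ballI)
  show "f ` V \<noteq> {}" using assms by (simp add: connected_graph_def)
  fix a b assume "a \<in> f ` V" "b \<in> f ` V"
  then obtain u v where uv: "u \<in> V" "v \<in> V" "a = f u" "b = f v" by auto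
  then obtain n xs where "walk_of_len V E u v n xs" using assms unfolding connected_graph_def by blast
  then show "\<exists>n xs. walk_of_len (f ` V) (map_prod f f ` E) a b n xs"
    using wol_transfer[OF uv(1,2)] uv by blast
qed

lemma median_transfer:
  assumes "median_graph V E"
  shows "median_graph (f`V) (map_prod f f ` E)"
  unfolding median_graph_def
proof (intro conjI ballI)
  show "connected_graph (f`V) (map_prod f f ` E)"
    using assms connected_transfer unfolding median_graph_def by blast
  fix a b c assume abc: "a \<in> f`V" "b \<in> f`V" "c \<in> f`V"
  then obtain u v w where uvw: "u\<in>V" "v\<in>V" "w\<in>V" "a = f u" "b = f v" "c = f w" by auto
  have i1: "interval V E u v \<subseteq> V" "interval V E v w \<subseteq> V" "interval V E w u \<subseteq> V"
      by (rule interval_subset)+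
  have eq: "interval (f`V) (map_prod f f ` E) a b \<inter> interval (f`V) (map_prod f f ` E) b c
        \<inter> interval (f`V) (map_prod f f ` E) c a
      = f ` (interval V E u v \<inter> interval V E v w \<inter> interval V E w u)"
    proof -
    have "f ` (interval V E u v \<inter> interval V E v w \<inter> interval V E w u)
       = f ` (interval V E u v \<inter> interval V E v w) \<inter> f ` interval V E w u"
      by (rule inj_on_image_Int[OF inj]) (use i1 in auto)
    also have "f ` (interval V E u v \<inter> interval V E v w) = f ` interval V E u v \<inter> f ` interval V E v w"
      by (rule inj_on_image_Int[OF inj]) (use i1 in auto)
    finally show ?thesis
      unfolding uvw(4-6) interval_transfer[OF uvw(1,2)] interval_transfer[OF uvw(2,3)]
        interval_transfer[OF uvw(3,1)] by simp
  qed
  have ij: "inj_on f (interval V E u v \<inter> interval V E v w \<inter> interval V E w u)"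
    by (rule inj_on_subset[OF inj]) (use i1 in blast)
  have c1: "card (interval V E u v \<inter> interval V E v w \<inter> interval V E w u) = 1"
    using assms uvw(1-3) unfolding median_graph_def by blast
  show "card (interval (f`V) (map_prod f f ` E) a b \<inter> interval (f`V) (map_prod f f ` E) b c
        \<inter> interval (f`V) (map_prod f f ` E) c a) = 1"
    unfolding eq card_image[OF ij] by (rule c1)
qed

lemma graph_transfer:
  assumes "graph V E"
  shows "graph (f`V) (map_prod f f ` E)"
  unfolding graph_def
proof (intro conjI allI)
  show "finite (f ` V)" using assms by (simp add: graph_def)
  show "map_prod f f ` E \<subseteq> f ` V \<times> f ` V" using EV by auto
  show "sym (map_prod f f ` E)" using assms unfolding graph_def sym_def by auto
  fix x show "(x, x) \<notin> map_prod f f ` E"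
  proof
    assume "(x, x) \<in> map_prod f f ` E"
    then obtain a b where "(a,b) \<in> E" "f a = x" "f b = x" by auto
    moreover then have "a \<in> V" "b \<in> V" using EV by auto
    ultimately have "a = b" "(a,b) \<in> E" using inj by (auto dest: inj_onD)
    then show False using assms by (auto simp: graph_def)
  qed
qed

end

definition nd :: "nat \<Rightarrow> nat \<Rightarrow> nat" where "nd a b = a - b + (b - a)"

definition l1 :: "nat list \<Rightarrow> nat list \<Rightarrow> nat list \<Rightarrow> nat" where
  "l1 ns x y = (\<Sum>j<length ns. nd (x!j) (y!j))"

lemma l1_triangle: "l1 ns x z \<le> l1 ns x y + l1 ns y z"
  unfolding l1_def sum.distrib[symmetric] by (rule sum_mono) (simp add: nd_def)

lemma l1_sym: "l1 ns x y = l1 ns y x"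
  unfolding l1_def nd_def by (simp add: add.commute)

lemma l1_self[simp]: "l1 ns x x = 0"
  unfolding l1_def nd_def by simp

lemma latV_eqI:
  assumes "x \<in> lattice_V ns" "y \<in> lattice_V ns" "\<forall>j<length ns. x!j = y!j"
  shows "x = y"
  using assms by (intro nth_equalityI) (auto simp: lattice_V_def)

lemma l1_zero:
  assumes "x \<in> lattice_V ns" "y \<in> lattice_V ns" "l1 ns x y = 0"
  shows "x = y"
proof (rule latV_eqI[OF assms(1,2)], intro allI impI)
  fix j assume "j < length ns"
  then have "nd (x!j) (y!j) = 0" using assms(3) unfolding l1_def by simp
  then show "x!j = y!j" by (simp add: nd_def)
qed

lemma sum_single_diff:
  fixes f g :: "nat \<Rightarrow> nat"
  assumes "j < n" "\<forall>l<n. l \<noteq> j \<longrightarrow> f l = g l"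
  shows "(\<Sum>l<n. f l) + g j = (\<Sum>l<n. g l) + f j"
proof -
  have "(\<Sum>l<n. f l) = f j + (\<Sum>l\<in>{..<n}-{j}. f l)" using assms(1) by (simp add: sum.remove)
  moreover have "(\<Sum>l<n. g l) = g j + (\<Sum>l\<in>{..<n}-{j}. g l)" using assms(1) by (simp add: sum.remove)
  moreover have "(\<Sum>l\<in>{..<n}-{j}. f l) = (\<Sum>l\<in>{..<n}-{j}. g l)"
    using assms(2) by (intro sum.cong) auto
  ultimately show ?thesis by simp
qed

lemma edge_l1:
  assumes "(x,y) \<in> lattice_E ns"
  shows "l1 ns x y = 1"
proof -
  obtain j where j: "j < length ns" "x ! j + 1 = y ! j \<or> y ! j + 1 = x ! j"
     "\<forall>l<length ns. l \<noteq> j \<longrightarrow> x ! l = y ! l"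
    using assms unfolding lattice_E_def by auto
  have "(\<Sum>l<length ns. nd (x!l) (y!l)) + 0 = (\<Sum>l<length ns. (\<lambda>l. 0) l) + nd (x!j) (y!j)"
    using sum_single_diff[OF j(1), of "\<lambda>l. nd (x!l) (y!l)" "\<lambda>l. 0"] j(3)
    by (simp add: nd_def)
  then show ?thesis using j(2) unfolding l1_def nd_def by auto
qed

lemma walk_l1:
  "walk (lattice_V ns) (lattice_E ns) xs \<Longrightarrow> l1 ns (hd xs) (last xs) \<le> length xs - 1"
proof (induction xs)
  case Nil then show ?case by (simp add: walk_def)
next
  case (Cons x xs)
  show ?case
  proof (cases xs)
    case Nil then show ?thesis by simp
  next
    case (Cons y ys)
    then have e: "(x,y) \<in> lattice_E ns" and w: "walk (lattice_V ns) (lattice_E ns) xs"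
      using Cons.prems by auto
    have "l1 ns x (last xs) \<le> l1 ns x y + l1 ns y (last xs)" by (rule l1_triangle)
    also have "\<dots> \<le> 1 + (length xs - 1)" using edge_l1[OF e] Cons.IH[OF w] Cons by simp
    finally show ?thesis using Cons by simp
  qed
qed

lemma step_toward:
  assumes x: "x \<in> lattice_V ns" and y: "y \<in> lattice_V ns" and ne: "x \<noteq> y"
  shows "\<exists>x'. (x,x') \<in> lattice_E ns \<and> x' \<in> lattice_V ns \<and> l1 ns x' y + 1 = l1 ns x y"
proof -
  obtain j where j: "j < length ns" "x!j \<noteq> y!j" using latV_eqI[OF x y] ne by blast
  define c where "c = (if x!j < y!j then x!j + 1 else x!j - 1)"
  define x' where "x' = x[j := c]"
  have lx: "length x = length ns" "length y = length ns" using x y by (auto simp: lattice_V_def)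
  have xj: "x!j < ns!j" "y!j < ns!j" using x y j by (auto simp: lattice_V_def)
  have x'L: "x' \<in> lattice_V ns"
    unfolding lattice_V_def
  proof (intro CollectI conjI allI impI)
    show "length x' = length ns" using lx by (simp add: x'_def)
    fix l assume l: "l < length ns"
    show "x'!l < ns!l"
    proof (cases "l = j")
      case True then show ?thesis using xj lx j by (auto simp: x'_def c_def)
    next
      case False then show ?thesis using x l by (auto simp: x'_def lattice_V_def)
    qed
  qed
  have nth': "\<forall>l<length ns. l \<noteq> j \<longrightarrow> x'!l = x!l" "x'!j = c"
    using lx j by (auto simp: x'_def)
  have E: "(x,x') \<in> lattice_E ns"
    unfolding lattice_E_def using x x'L j nth'
    by (auto simp: c_def intro!: exI[of _ j] split: if_splits)
  have "(\<Sum>l<length ns. nd (x'!l) (y!l)) + nd (x!j) (y!j) =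
        (\<Sum>l<length ns. nd (x!l) (y!l)) + nd (x'!j) (y!j)"
    by (rule sum_single_diff[OF j(1)]) (use nth' in auto)
  moreover have "nd (x'!j) (y!j) + 1 = nd (x!j) (y!j)"
    using nth'(2) j(2) by (auto simp: c_def nd_def)
  ultimately have "l1 ns x' y + 1 = l1 ns x y" unfolding l1_def by linarith
  then show ?thesis using E x'L by blast
qed

lemma geodesic:
  assumes "x \<in> lattice_V ns" "y \<in> lattice_V ns"
  shows "\<exists>xs. walk_of_len (lattice_V ns) (lattice_E ns) x y (l1 ns x y) xs"
  using assms
proof (induction "l1 ns x y" arbitrary: x)
  case 0
  then have "x = y" using l1_zero by metis
  then show ?case using 0 by (intro exI[of _ "[x]"]) (auto simp: walk_of_len_def)
next
  case (Suc m)
  then have "x \<noteq> y" by (metis l1_self nat.simps(3))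
  then obtain x' where x': "(x,x') \<in> lattice_E ns" "x' \<in> lattice_V ns" "l1 ns x' y + 1 = l1 ns x y"
    using step_toward Suc.prems by blast
  then have "m = l1 ns x' y" using Suc.hyps by simp
  then obtain xs where xs: "walk_of_len (lattice_V ns) (lattice_E ns) x' y (l1 ns x' y) xs"
    using Suc.hyps x' Suc.prems by blast
  then have "xs = x' # tl xs" by (cases xs) (auto simp: walk_of_len_def walk_def)
  then have "walk_of_len (lattice_V ns) (lattice_E ns) x y (l1 ns x y) (x # xs)"
    using xs x' Suc.prems unfolding walk_of_len_def
    by (metis Suc_eq_plus1 last_ConsR length_Cons list.sel(1) list.simps(3) walk_Cons2)
  then show ?case by blast
qed

lemma gdist_l1:
  assumes "x \<in> lattice_V ns" "y \<in> lattice_V ns"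
  shows "gdist (lattice_V ns) (lattice_E ns) x y = l1 ns x y"
  unfolding gdist_def
proof (rule Least_equality)
  show "\<exists>xs. walk_of_len (lattice_V ns) (lattice_E ns) x y (l1 ns x y) xs" by (rule geodesic[OF assms])
  fix m assume "\<exists>xs. walk_of_len (lattice_V ns) (lattice_E ns) x y m xs"
  then obtain xs where "walk_of_len (lattice_V ns) (lattice_E ns) x y m xs" by blast
  then show "l1 ns x y \<le> m" using walk_l1[of ns xs] by (auto simp: walk_of_len_def)
qed


lemma walk_split_at:
  assumes "walk V E (as @ w # bs)"
  shows "walk V E (as @ [w]) \<and> walk V E (w # bs)"
proof (cases "bs = []")
  case True
  then show ?thesis using assms walk_set[OF assms] by auto
next
  case False
  have 1: "walk V E (as @ [w])"
    using walk_append_split[of V E "as @ [w]" bs] assms False by simp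
  have 2: "walk V E (w # bs)"
  proof (cases "as = []")
    case True then show ?thesis using assms by simp
  next
    case False then show ?thesis using walk_append_split[of V E as "w # bs"] assms by simp
  qed
  show ?thesis using 1 2 by blast
qed

lemma interval_l1:
  assumes x: "x \<in> lattice_V ns" and y: "y \<in> lattice_V ns"
  shows "interval (lattice_V ns) (lattice_E ns) x y =
         {w \<in> lattice_V ns. l1 ns x w + l1 ns w y = l1 ns x y}"
proof (intro set_eqI iffI)
  fix w assume "w \<in> interval (lattice_V ns) (lattice_E ns) x y"
  then obtain xs where xs: "walk_of_len (lattice_V ns) (lattice_E ns) x y (l1 ns x y) xs" "w \<in> set xs"
    unfolding interval_def gdist_l1[OF x y] by blast
  obtain as bs where ab: "xs = as @ w # bs" using split_list[OF xs(2)] by blast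
  have w: "walk (lattice_V ns) (lattice_E ns) xs" "hd xs = x" "last xs = y" "length xs = Suc (l1 ns x y)"
    using xs(1) by (auto simp: walk_of_len_def)
  have wl: "w \<in> lattice_V ns" using walk_set[OF w(1)] xs(2) by blast
  have p: "walk (lattice_V ns) (lattice_E ns) (as @ [w])" "walk (lattice_V ns) (lattice_E ns) (w # bs)"
    using walk_split_at[of _ _ as w bs] w(1) ab by auto
  have "hd (as @ [w]) = x" using w(2) ab by (cases as) auto
  then have 1: "l1 ns x w \<le> length as" using walk_l1[OF p(1)] by simp
  have "last (w # bs) = y" using w(3) ab by (cases bs) auto
  then have 2: "l1 ns w y \<le> length bs" using walk_l1[OF p(2)] by simp
  have "length as + length bs = l1 ns x y" using w(4) ab by simp
  then have "l1 ns x w + l1 ns w y = l1 ns x y" using 1 2 l1_triangle[of ns x y w] by linarith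
  then show "w \<in> {w \<in> lattice_V ns. l1 ns x w + l1 ns w y = l1 ns x y}" using wl by blast
next
  fix w assume "w \<in> {w \<in> lattice_V ns. l1 ns x w + l1 ns w y = l1 ns x y}"
  then have wl: "w \<in> lattice_V ns" and eq: "l1 ns x w + l1 ns w y = l1 ns x y" by auto
  obtain p where p: "walk_of_len (lattice_V ns) (lattice_E ns) x w (l1 ns x w) p" using geodesic[OF x wl] by blast
  obtain q where q: "walk_of_len (lattice_V ns) (lattice_E ns) w y (l1 ns w y) q" using geodesic[OF wl y] by blast
  have pw: "walk (lattice_V ns) (lattice_E ns) p" "hd p = x" "last p = w" "length p = Suc (l1 ns x w)"
    using p by (auto simp: walk_of_len_def)
  have qw: "walk (lattice_V ns) (lattice_E ns) q" "hd q = w" "last q = y" "length q = Suc (l1 ns w y)"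
    using q by (auto simp: walk_of_len_def)
  have pne: "p \<noteq> []" using pw(4) by auto
  have qq: "q = w # tl q" using qw by (cases q) auto
  have W: "walk (lattice_V ns) (lattice_E ns) (p @ tl q)" using walk_concat[OF pw(1) qw(1)] pw qw by simp
  have H: "hd (p @ tl q) = x" using pne pw by simp
  have La: "last (p @ tl q) = y"
  proof (cases "tl q = []")
    case True then show ?thesis using qq qw pw by (metis append_Nil2 last_ConsL)
  next
    case False then show ?thesis using qq qw by (metis last_ConsR last_appendR)
  qed
  have Le: "length (p @ tl q) = Suc (l1 ns x y)" using pw(4) qw(4) eq by simp
  have "w \<in> set (p @ tl q)" using pne pw(3) by (metis Un_iff last_in_set set_append)
  then show "w \<in> interval (lattice_V ns) (lattice_E ns) x y"
    unfolding interval_def gdist_l1[OF x y] walk_of_len_def using W H La Le by blast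
qed

lemma l1_split_iff:
  "l1 ns x w + l1 ns w y = l1 ns x y \<longleftrightarrow>
     (\<forall>j<length ns. nd (x!j) (w!j) + nd (w!j) (y!j) = nd (x!j) (y!j))"
proof
  assume h: "l1 ns x w + l1 ns w y = l1 ns x y"
  have le: "\<And>j. nd (x!j) (y!j) \<le> nd (x!j) (w!j) + nd (w!j) (y!j)" by (simp add: nd_def)
  have "(\<Sum>j<length ns. nd (x!j) (w!j) + nd (w!j) (y!j) - nd (x!j) (y!j)) =
        (\<Sum>j<length ns. nd (x!j) (w!j) + nd (w!j) (y!j)) - (\<Sum>j<length ns. nd (x!j) (y!j))"
    by (rule sum_subtractf_nat) (rule le)
  also have "\<dots> = 0" using h unfolding l1_def sum.distrib by simp
  finally show "\<forall>j<length ns. nd (x!j) (w!j) + nd (w!j) (y!j) = nd (x!j) (y!j)"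
    using le by (auto simp: le_antisym)
next
  assume "\<forall>j<length ns. nd (x!j) (w!j) + nd (w!j) (y!j) = nd (x!j) (y!j)"
  then show "l1 ns x w + l1 ns w y = l1 ns x y" unfolding l1_def sum.distrib[symmetric]
    by (intro sum.cong) auto
qed

lemma nd_between: "nd a w + nd w b = nd a b \<longleftrightarrow> min a b \<le> w \<and> w \<le> max a b"
  by (auto simp: nd_def)

lemma interval_box:
  assumes x: "x \<in> lattice_V ns" and y: "y \<in> lattice_V ns"
  shows "interval (lattice_V ns) (lattice_E ns) x y =
         {w \<in> lattice_V ns. \<forall>j<length ns. min (x!j) (y!j) \<le> w!j \<and> w!j \<le> max (x!j) (y!j)}"
  unfolding interval_l1[OF x y] l1_split_iff nd_between by simp


lemma lattice_graph: "graph (lattice_V ns) (lattice_E ns)"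
  unfolding graph_def
proof (intro conjI allI)
  have "lattice_V ns \<subseteq> {xs. set xs \<subseteq> {..< Suc (Max (set ns))} \<and> length xs = length ns}"
  proof
    fix xs assume xs: "xs \<in> lattice_V ns"
    have "set xs \<subseteq> {..< Suc (Max (set ns))}"
    proof
      fix a assume "a \<in> set xs"
      then obtain j where j: "j < length xs" "a = xs!j" by (auto simp: in_set_conv_nth)
      then have jj: "j < length ns" "a < ns!j" using xs by (auto simp: lattice_V_def)
      have "ns!j \<le> Max (set ns)" using jj(1) by (simp add: Max_ge)
      show "a \<in> {..< Suc (Max (set ns))}" using jj \<open>ns!j \<le> Max (set ns)\<close> unfolding lessThan_iff by linarith
    qed
    then show "xs \<in> {xs. set xs \<subseteq> {..< Suc (Max (set ns))} \<and> length xs = length ns}"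
      using xs by (simp add: lattice_V_def)
  qed
  then show "finite (lattice_V ns)" using finite_lists_length_eq[of "{..< Suc (Max (set ns))}"]
    by (rule finite_subset) simp
  show "lattice_E ns \<subseteq> lattice_V ns \<times> lattice_V ns" by (auto simp: lattice_E_def)
  show "sym (lattice_E ns)" unfolding sym_def lattice_E_def by fastforce
  fix x show "(x, x) \<notin> lattice_E ns" unfolding lattice_E_def by auto
qed

lemma lattice_nonempty:
  assumes "\<forall>j<length ns. ns!j > 0"
  shows "replicate (length ns) 0 \<in> lattice_V ns"
  using assms by (simp add: lattice_V_def)

lemma lattice_connected:
  assumes "\<forall>j<length ns. ns!j > 0"
  shows "connected_graph (lattice_V ns) (lattice_E ns)"
  unfolding connected_graph_def using lattice_nonempty[OF assms] geodesic by blast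

definition med :: "nat \<Rightarrow> nat \<Rightarrow> nat \<Rightarrow> nat" where
  "med a b c = max (min a b) (min (max a b) c)"

lemma lattice_median:
  assumes "\<forall>j<length ns. ns!j > 0"
  shows "median_graph (lattice_V ns) (lattice_E ns)"
  unfolding median_graph_def
proof (intro conjI ballI)
  show "connected_graph (lattice_V ns) (lattice_E ns)" by (rule lattice_connected[OF assms])
  fix u v w assume u: "u \<in> lattice_V ns" and v: "v \<in> lattice_V ns" and w: "w \<in> lattice_V ns"
  define m where "m = map (\<lambda>j. med (u!j) (v!j) (w!j)) [0..<length ns]"
  have mnth: "\<And>j. j < length ns \<Longrightarrow> m!j = med (u!j) (v!j) (w!j)" by (simp add: m_def)
  have mL: "m \<in> lattice_V ns"
    unfolding lattice_V_def
  proof (intro CollectI conjI allI impI)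
    show "length m = length ns" by (simp add: m_def)
    fix j assume j: "j < length ns"
    then have "u!j < ns!j" "v!j < ns!j" "w!j < ns!j" using u v w by (auto simp: lattice_V_def)
    then show "m!j < ns!j" using j by (simp add: mnth med_def min_def max_def)
  qed
  have "interval (lattice_V ns) (lattice_E ns) u v \<inter> interval (lattice_V ns) (lattice_E ns) v w \<inter>
        interval (lattice_V ns) (lattice_E ns) w u = {m}"
  proof (intro set_eqI iffI)
    fix z assume "z \<in> interval (lattice_V ns) (lattice_E ns) u v \<inter> interval (lattice_V ns) (lattice_E ns) v w \<inter>
        interval (lattice_V ns) (lattice_E ns) w u"
    then have zL: "z \<in> lattice_V ns" and
      c: "\<forall>j<length ns. min (u!j) (v!j) \<le> z!j \<and> z!j \<le> max (u!j) (v!j)"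
         "\<forall>j<length ns. min (v!j) (w!j) \<le> z!j \<and> z!j \<le> max (v!j) (w!j)"
         "\<forall>j<length ns. min (w!j) (u!j) \<le> z!j \<and> z!j \<le> max (w!j) (u!j)"
      by (auto simp: interval_box u v w)
    have "\<forall>j<length ns. z!j = m!j"
    proof (intro allI impI)
      fix j assume j: "j < length ns"
      then show "z!j = m!j" using c[rule_format, OF j] unfolding mnth[OF j] med_def min_def max_def
        by (auto split: if_splits)
    qed
    then show "z \<in> {m}" using latV_eqI[OF zL mL] by simp
  next
    fix z assume "z \<in> {m}"
    then have z: "z = m" by simp
    show "z \<in> interval (lattice_V ns) (lattice_E ns) u v \<inter> interval (lattice_V ns) (lattice_E ns) v w \<inter>
        interval (lattice_V ns) (lattice_E ns) w u"
      unfolding z using mL by (auto simp: interval_box u v w mnth med_def min_def max_def)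
  qed
  then show "card (interval (lattice_V ns) (lattice_E ns) u v \<inter> interval (lattice_V ns) (lattice_E ns) v w \<inter>
        interval (lattice_V ns) (lattice_E ns) w u) = 1" by simp
qed

lemma slice_convex:
  assumes "i < length ns"
  shows "convex_set (lattice_V ns) (lattice_E ns) {z \<in> lattice_V ns. z!i = c}"
  unfolding convex_set_def using assms by (auto simp: interval_box)


theorem mainTheorem1:
  fixes V :: "'a set" and E :: "('a \<times> 'a) set"
  assumes "graph V E"
  shows "latticewidth (chromatic_number V E) V E \<le> chromatic_number V E"
proof -
  define k where "k = chromatic_number V E"
  have finV: "finite V" and EV: "E \<subseteq> V \<times> V" and irr: "\<And>x. (x,x) \<notin> E"
    using assms by (auto simp: graph_def)
  have "\<exists>c. c ` V \<subseteq> {..<k} \<and> (\<forall>(u, v)\<in>E. c u \<noteq> c v)"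
  proof -
    obtain h where h: "bij_betw h V {0..<card V}" using ex_bij_betw_finite_nat[OF finV] by blast
    have "h ` V \<subseteq> {..<card V} \<and> (\<forall>(u, v)\<in>E. h u \<noteq> h v)"
    proof (intro conjI)
      show "h ` V \<subseteq> {..<card V}" using h by (auto simp: bij_betw_def)
      show "\<forall>(u, v)\<in>E. h u \<noteq> h v"
      proof (clarify)
        fix u v assume uv: "(u,v) \<in> E" "h u = h v"
        then have "u \<in> V" "v \<in> V" using EV by auto
        then have "u = v" using uv h by (auto simp: bij_betw_def dest: inj_onD)
        then show False using uv irr by simp
      qed
    qed
    then have "\<exists>c. c ` V \<subseteq> {..<card V} \<and> (\<forall>(u, v)\<in>E. c u \<noteq> c v)" by blast
    then show ?thesis unfolding k_def chromatic_number_def by (rule LeastI)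
  qed
  then obtain c where c: "c ` V \<subseteq> {..<k}" "\<forall>(u, v)\<in>E. c u \<noteq> c v" by blast
  define C where "C i = {v\<in>V. c v = i}" for i
  have "\<forall>i. \<exists>h. bij_betw h (C i) {0..<card (C i)}"
    using finV by (auto simp: C_def intro!: ex_bij_betw_finite_nat)
  then obtain g where g: "\<And>i. bij_betw (g i) (C i) {0..<card (C i)}" by metis
  define idx where "idx v = g (c v) v" for v
  have idx_lt: "idx v < card (C (c v))" if "v \<in> V" for v
    using g[of "c v"] that by (auto simp: bij_betw_def idx_def C_def)
  have idx_inj: "u = v" if "u \<in> V" "v \<in> V" "c u = c v" "idx u = idx v" for u v
    using g[of "c v"] that unfolding bij_betw_def idx_def C_def by (auto dest: inj_onD)
  have cV: "c v < k" if "v \<in> V" for v using c that by auto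
  define ns where "ns = map (\<lambda>i. max 1 (card (C i))) [0..<k]"
  have lns: "length ns = k" by (simp add: ns_def)
  have nsj: "ns ! i = max 1 (card (C i))" if "i < k" for i using that by (simp add: ns_def)
  have pos: "\<forall>j<length ns. ns!j > 0" using nsj lns by (simp add: max_def)
  define L where "L = lattice_V ns"
  define LE where "LE = lattice_E ns"
  define VM :: "nat set" where "VM = to_nat ` L"
  define EM where "EM = map_prod to_nat to_nat ` LE"
  define X where "X a = {v\<in>V. idx v = (from_nat a :: nat list) ! c v}" for a
  have LEL: "LE \<subseteq> L \<times> L" using lattice_graph[of ns] by (simp add: L_def LE_def graph_def)
  have inj: "inj_on (to_nat :: nat list \<Rightarrow> nat) L" by simp
  define pt where "pt u v = (replicate k 0)[c u := idx u, c v := idx v]" for u v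
  have ptL: "pt u v \<in> L" if "u \<in> V" "v \<in> V" for u v
    unfolding L_def lattice_V_def
  proof (intro CollectI conjI allI impI)
    show "length (pt u v) = length ns" by (simp add: pt_def lns)
    fix j assume j: "j < length ns"
    have "idx u < ns ! c u" "idx v < ns ! c v"
      using idx_lt[OF that(1)] idx_lt[OF that(2)] nsj cV that by fastforce+
    then show "pt u v ! j < ns ! j" using j pos lns cV that
      by (auto simp: pt_def nth_list_update)
  qed
  have ptv: "pt u v ! c v = idx v" if "u \<in> V" "v \<in> V" for u v
    using that cV by (simp add: pt_def)
  have ptu: "pt u v ! c u = idx u" if "u \<in> V" "v \<in> V" "c u \<noteq> c v" for u v
    using that cV by (simp add: pt_def nth_list_update)
  have LV: "\<And>v. v \<in> V \<Longrightarrow> {a\<in>VM. v \<in> X a} = to_nat ` {z \<in> L. z ! c v = idx v}"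
    by (auto simp: VM_def X_def)
  have gL: "graph L LE" using lattice_graph by (simp add: L_def LE_def)
  have MD: "median_decomposition V E VM EM X"
    unfolding median_decomposition_def
  proof (intro conjI)
    show "graph VM EM" unfolding VM_def EM_def by (rule graph_transfer[OF inj LEL gL])
    show "median_graph VM EM" unfolding VM_def EM_def
      by (rule median_transfer[OF inj LEL]) (use lattice_median[OF pos] in \<open>simp add: L_def LE_def\<close>)
    show "\<forall>a\<in>VM. X a \<subseteq> V" by (auto simp: X_def)
    show "\<forall>(u, v)\<in>E. \<exists>a\<in>VM. u \<in> X a \<and> v \<in> X a"
    proof clarify
      fix u v assume uv: "(u,v) \<in> E"
      then have V: "u \<in> V" "v \<in> V" and ne: "c u \<noteq> c v" using EV c by auto
      show "\<exists>a\<in>VM. u \<in> X a \<and> v \<in> X a"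
        by (rule bexI[of _ "to_nat (pt u v)"]) (use V ne ptL ptu ptv in \<open>auto simp: X_def VM_def\<close>)
    qed
    show "\<forall>v\<in>V. {a \<in> VM. v \<in> X a} \<noteq> {} \<and> convex_set VM EM {a \<in> VM. v \<in> X a}"
    proof (intro ballI conjI)
    fix v assume v: "v \<in> V"
    show "{a \<in> VM. v \<in> X a} \<noteq> {}" unfolding LV[OF v] using ptL[OF v v] ptv[OF v v] by blast
    show "convex_set VM EM {a \<in> VM. v \<in> X a}" unfolding LV[OF v] unfolding VM_def EM_def
      by (rule convex_transfer[OF inj LEL])
         (use slice_convex[of "c v" ns "idx v"] cV[OF v] lns in \<open>simp add: L_def LE_def\<close>)
    qed
  qed
  have LD: "lattice_dim_le VM EM k"
    unfolding lattice_dim_le_def embeds_in_lattice_def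
  proof (intro exI conjI)
    show "k \<le> k" by simp
    show "length ns = k" by (rule lns)
    show "\<forall>j<k. 0 < ns ! j" using pos lns by simp
    show "isometric_embedding_lattice VM EM ns from_nat"
      unfolding isometric_embedding_lattice_def
    proof (intro conjI ballI)
      show "from_nat ` VM \<subseteq> lattice_V ns" by (auto simp: VM_def L_def)
      fix a b assume "a \<in> VM" "b \<in> VM"
      then obtain x y where xy: "x \<in> L" "y \<in> L" "a = to_nat x" "b = to_nat y" by (auto simp: VM_def)
      show "gdist (lattice_V ns) (lattice_E ns) (from_nat a) (from_nat b) = gdist VM EM a b"
        using gdist_transfer[OF inj LEL xy(1,2)] xy by (simp add: VM_def EM_def L_def LE_def)
    qed
  qed
  have W: "decomp_width VM X \<le> k"
    unfolding decomp_width_def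
  proof (subst Max_le_iff)
    show "finite ((\<lambda>a. card (X a)) ` VM)" using gL by (simp add: graph_def VM_def)
    show "(\<lambda>a. card (X a)) ` VM \<noteq> {}" using lattice_nonempty[OF pos] unfolding VM_def L_def by blast
    show "\<forall>w\<in>(\<lambda>a. card (X a)) ` VM. w \<le> k"
    proof clarify
      fix a assume "a \<in> VM"
      have "inj_on c (X a)" unfolding inj_on_def X_def using idx_inj by auto
      moreover have "c ` X a \<subseteq> {..<k}" using c by (auto simp: X_def)
      ultimately show "card (X a) \<le> k" using card_inj_on_le[of c "X a" "{..<k}"] by simp
    qed
  qed
  have "decomp_width VM X \<in> {w. \<exists>VM EM X. median_decomposition V E VM EM X \<and>
      lattice_dim_le VM EM k \<and> w = decomp_width VM X}" using MD LD by blast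
  then have "latticewidth k V E \<le> decomp_width VM X"
    unfolding latticewidth_def Inf_nat_def by (rule Least_le)
  then show ?thesis using W unfolding k_def by simp
qed

end
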